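(* Let $d\ge2$, $\varepsilon>0$ and $\mathbf h\in\Delta_d$, and let $T=T_{\mathbf h}$ with alternance points $0=\nu_1<\nu_2<\cdots<\nu_d$. Then $$\kappa(\mathbf h,\varepsilon)=\inf\Bigl\{\frac{1-T(t)}{T'(t)-\varepsilon T(t)}\ :\ t\in[0,\nu_2],\ T'(t)>\varepsilon T(t)\Bigr\},$$ and moreover $$\kappa(\mathbf h,\varepsilon)>\frac{2\varepsilon}{M_2(\mathbf h)+2\varepsilon^2}.$$
   Context: Let $\mathbb R_+=[0,\infty)$ and $\|f\|_{\mathbb R_+}=\sup_{t\ge 0}|f(t)|$. For a vector $\mathbf h=(h_1,\dots,h_d)$ with $0<h_1\le\cdots\le h_d$, let $\mathcal P_{\mathbf h}$ be the $d$-dimensional space of real functions on $\mathbb R_+$ spanned by the following system: each distinct value $\eta$ occurring exactly $m$ times among $h_1,\dots,h_d$ contributes the $m$ functions $e^{-\eta t}, te^{-\eta t},\dots,t^{m-1}e^{-\eta t}$. $M_2(\mathbf h)=\max\{\|p''\|_{\mathbb R_+}: p\in\mathcal P_{\mathbf h},\ \|p\|_{\mathbb R_+}\le1\}$. $\Delta_d=\{\mathbf h\in\mathbb R^d: 0<h_1\le\cdots\le h_d\le1\}$. The $\mathbf h$-Chebyshev polynomial $T_{\mathbf h}$ is the unique $T\in\mathcal P_{\mathbf h}$ with $\|T\|_{\mathbb R_+}=1$ for which there exist points $0=\nu_1<\nu_2<\cdots<\nu_d$ with $T(\nu_j)=(-1)^j$ for $j=1,\dots,d$. For $\varepsilon>0$,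 $\kappa(\mathbf h,\varepsilon)$ is the infimum of $\dfrac{1-p(0)}{p'(0)-\varepsilon p(0)}$ over all $p\in\mathcal P_{\mathbf h}$ with $\|p\|_{\mathbb R_+}\le1$ and $p'(0)>\varepsilon p(0)$. *)

theory Defs
  imports "HOL-Analysis.Analysis"
begin

definition sup_norm :: "(real \<Rightarrow> real) \<Rightarrow> real" where
  "sup_norm f = (SUP t\<in>{0..}. \<bar>f t\<bar>)"

text \<open>The vector h = (h_1,...,h_d) is a list (0-indexed). The i-th basis function is
  t^k e^(-h_i t) where k is the number of earlier entries equal to h_i; for sorted h
  this gives exactly e^(-eta t),...,t^(m-1) e^(-eta t) for each value eta of multiplicity m.\<close>
definition exp_basis :: "real list \<Rightarrow> nat \<Rightarrow> real \<Rightarrow> real" where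
  "exp_basis h i t = t ^ card {j. j < i \<and> h ! j = h ! i} * exp (- (h ! i) * t)"

definition Pspace :: "real list \<Rightarrow> (real \<Rightarrow> real) set" where
  "Pspace h = {p. \<exists>c :: nat \<Rightarrow> real. p = (\<lambda>t. \<Sum>i<length h. c i * exp_basis h i t)}"

definition Delta :: "nat \<Rightarrow> real list set" where
  "Delta d = {h. length h = d \<and> sorted h \<and> (\<forall>x\<in>set h. 0 < x \<and> x \<le> 1)}"

definition M2 :: "real list \<Rightarrow> real" where
  "M2 h = Sup {sup_norm (deriv (deriv p)) | p. p \<in> Pspace h \<and> sup_norm p \<le> 1}"

definition kappa :: "real list \<Rightarrow> real \<Rightarrow> real" where
  "kappa h \<epsilon> = Inf {(1 - p 0) / (deriv p 0 - \<epsilon> * p 0) | p.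
      p \<in> Pspace h \<and> sup_norm p \<le> 1 \<and> deriv p 0 > \<epsilon> * p 0}"

text \<open>T is the h-Chebyshev polynomial with alternance points nu_1 < ... < nu_d (1-indexed).\<close>
definition is_cheb_alt :: "real list \<Rightarrow> (real \<Rightarrow> real) \<Rightarrow> (nat \<Rightarrow> real) \<Rightarrow> bool" where
  "is_cheb_alt h T \<nu> \<longleftrightarrow> T \<in> Pspace h \<and> sup_norm T = 1 \<and> \<nu> 1 = 0 \<and>
     (\<forall>j\<in>{1..<length h}. \<nu> j < \<nu> (Suc j)) \<and>
     (\<forall>j\<in>{1..length h}. T (\<nu> j) = (-1) ^ j)"

end

theory Submission
  imports Defs "HOL-Computational_Algebra.Polynomial"
begin



definition esf :: "real set \<Rightarrow> (real \<Rightarrow> real poly) \<Rightarrow> real \<Rightarrow> real \<Rightarrow> real" where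
  "esf A P s x = (\<Sum>a\<in>A. poly (P a) x * exp ((s - a) * x))"

definition dP :: "(real \<Rightarrow> real poly) \<Rightarrow> real \<Rightarrow> real \<Rightarrow> real poly" where
  "dP P s a = pderiv (P a) + [:s - a:] * P a"

lemma esf_deriv: "((esf A P s) has_real_derivative esf A (dP P s) s x) (at x)"
proof (cases "finite A")
  case True
  have "((\<lambda>x. \<Sum>a\<in>A. poly (P a) x * exp ((s - a) * x)) has_real_derivative
        (\<Sum>a\<in>A. poly (pderiv (P a)) x * exp ((s - a) * x) + poly (P a) x * (exp ((s - a) * x) * (s - a)))) (at x)"
  proof (rule DERIV_sum)
    fix a assume "a \<in> A"
    have e: "((\<lambda>x. exp ((s - a) * x)) has_real_derivative exp ((s - a) * x) * (s - a)) (at x)"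
      by (rule DERIV_fun_exp) (auto intro!: derivative_eq_intros)
    show "((\<lambda>x. poly (P a) x * exp ((s - a) * x)) has_real_derivative
        poly (pderiv (P a)) x * exp ((s - a) * x) + poly (P a) x * (exp ((s - a) * x) * (s - a))) (at x)"
      using DERIV_mult[OF poly_DERIV[of "P a"] e] by (simp add: mult_ac)
  qed
  moreover have "(\<Sum>a\<in>A. poly (pderiv (P a)) x * exp ((s - a) * x) + poly (P a) x * (exp ((s - a) * x) * (s - a)))
      = esf A (dP P s) s x"
    unfolding esf_def dP_def by (intro sum.cong) (auto simp: algebra_simps)
  ultimately show ?thesis unfolding esf_def[abs_def] by simp
next
  case False
  then show ?thesis by (simp add: esf_def[abs_def])
qed

lemma esf_cont: "continuous_on S (esf A P s)"
  using esf_deriv by (meson DERIV_continuous continuous_at_imp_continuous_on)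

lemma deriv_esf: "deriv (esf A P s) = esf A (dP P s) s"
  using esf_deriv DERIV_imp_deriv by blast

lemma degree_dP: "degree (dP P s a) \<le> degree (P a)"
proof -
  have "degree (dP P s a) \<le> max (degree (pderiv (P a))) (degree ([:s - a:] * P a))"
    unfolding dP_def by (rule degree_add_le_max)
  moreover have "degree ([:s - a:] * P a) \<le> degree (P a)"
    by (simp add: degree_smult_le)
  ultimately show ?thesis by (simp add: degree_pderiv)
qed

lemma rolle_real:
  fixes f f' :: "real \<Rightarrow> real"
  assumes "a < b" "f a = f b" "\<And>x. (f has_real_derivative f' x) (at x)"
  shows "\<exists>z. a < z \<and> z < b \<and> f' z = 0"
proof -
  have c: "continuous_on {a..b} f"
    using assms(3) by (meson DERIV_continuous continuous_at_imp_continuous_on)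
  have "\<And>x. (f has_derivative (*) (f' x)) (at x)"
    using assms(3) by (simp add: has_field_derivative_def)
  from Rolle_deriv[OF assms(1,2) c this] obtain z where "a < z" "z < b" "(*) (f' z) = (\<lambda>v. 0)"
    by blast
  then have "f' z * 1 = 0" by (metis (mono_tags))
  then show ?thesis using \<open>a < z\<close> \<open>z < b\<close> by auto
qed

lemma rolle_many:
  fixes f f' :: "real \<Rightarrow> real"
  assumes "\<And>x. (f has_real_derivative f' x) (at x)"
  shows "finite Z \<Longrightarrow> Suc n \<le> card Z \<Longrightarrow> (\<forall>z\<in>Z. f z = 0) \<Longrightarrow>
     \<exists>Z'. finite Z' \<and> n \<le> card Z' \<and> (\<forall>z\<in>Z'. f' z = 0 \<and> z < Max Z)"
proof (induction n arbitrary: Z)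
  case 0
  then show ?case by (intro exI[of _ "{}"]) auto
next
  case (Suc n)
  define m where "m = Max Z"
  define Z0 where "Z0 = Z - {m}"
  have ne: "Z \<noteq> {}" using Suc.prems by auto
  have mZ: "m \<in> Z" using Max_in[OF Suc.prems(1) ne] m_def by simp
  have cZ0: "card Z0 = card Z - 1" using mZ Suc.prems(1) by (simp add: Z0_def)
  have fZ0: "finite Z0" using Suc.prems(1) Z0_def by simp
  have "Suc n \<le> card Z0" using cZ0 Suc.prems(2) by simp
  from Suc.IH[OF fZ0 this] Suc.prems(3) obtain Z' where Z': "finite Z'" "n \<le> card Z'"
     "\<forall>z\<in>Z'. f' z = 0 \<and> z < Max Z0" unfolding Z0_def by auto
  have ne0: "Z0 \<noteq> {}" using \<open>Suc n \<le> card Z0\<close> by auto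
  have M0: "Max Z0 \<in> Z0" using Max_in[OF fZ0 ne0] .
  have lt: "Max Z0 < m"
  proof -
    have "Max Z0 \<le> m" using M0 Suc.prems(1) m_def Z0_def by simp
    moreover have "Max Z0 \<noteq> m" using M0 Z0_def by simp
    ultimately show ?thesis by simp
  qed
  have "f (Max Z0) = f m" using M0 mZ Suc.prems(3) Z0_def by auto
  from rolle_real[OF lt this assms] obtain \<xi> where xi: "Max Z0 < \<xi>" "\<xi> < m" "f' \<xi> = 0" by blast
  have "\<xi> \<notin> Z'" using Z'(3) xi(1) by force
  show ?case
  proof (intro exI[of _ "insert \<xi> Z'"] conjI)
    show "finite (insert \<xi> Z')" using Z' by simp
    show "Suc n \<le> card (insert \<xi> Z')" using Z' \<open>\<xi> \<notin> Z'\<close> by simp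
    show "\<forall>z\<in>insert \<xi> Z'. f' z = 0 \<and> z < Max Z"
      using Z'(3) xi lt m_def by auto
  qed
qed

lemma esf_shift: "esf A P l y = exp ((l - s) * y) * esf A P s y"
proof -
  have "esf A P l y = (\<Sum>a\<in>A. exp ((l - s) * y) * (poly (P a) y * exp ((s - a) * y)))"
    unfolding esf_def
  proof (intro sum.cong refl)
    fix a
    have "exp ((l - a) * y) = exp ((l - s) * y) * exp ((s - a) * y)"
      by (simp add: mult_exp_exp algebra_simps)
    then show "poly (P a) y * exp ((l - a) * y) = exp ((l - s) * y) * (poly (P a) y * exp ((s - a) * y))"
      by simp
  qed
  also have "\<dots> = exp ((l - s) * y) * esf A P s y"
    unfolding esf_def by (simp add: sum_distrib_left)
  finally show ?thesis .
qed

lemma esf_zeros: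
  "finite A \<Longrightarrow> (\<Sum>a\<in>A. degree (P a) + 1) \<le> n \<Longrightarrow> finite Z \<Longrightarrow> n \<le> card Z \<Longrightarrow>
   (\<forall>z\<in>Z. esf A P s z = 0) \<Longrightarrow> esf A P s x = 0"
proof (induction n arbitrary: A P s Z x)
  case 0
  have "card A \<le> (\<Sum>a\<in>A. degree (P a) + 1)"
    using sum_mono[of A "\<lambda>_. 1::nat" "\<lambda>a. degree (P a) + 1"] by simp
  then have "A = {}" using 0 by simp
  then show ?case by (simp add: esf_def)
next
  case (Suc n)
  show ?case
  proof (cases "A = {}")
    case True
    then show ?thesis by (simp add: esf_def)
  next
    case False
    then obtain l where lA: "l \<in> A" by blast
    define Q where "Q = dP P l"
    define A' where "A' = (if degree (P l) = 0 then A - {l} else A)"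
    have gz: "\<forall>z\<in>Z. esf A P l z = 0" using Suc.prems(5) esf_shift[of A P l _ s] by simp
    from rolle_many[OF esf_deriv[of A P l] Suc.prems(3) Suc.prems(4) gz]
    obtain Z' where Z': "finite Z'" "n \<le> card Z'" "\<forall>z\<in>Z'. esf A (dP P l) l z = 0" by blast
    have Ql: "Q l = pderiv (P l)" unfolding Q_def dP_def by simp
    have eqA': "esf A' Q l y = esf A Q l y" for y
    proof (cases "degree (P l) = 0")
      case True
      then have "Q l = 0" using Ql by (simp add: pderiv_eq_0_iff)
      then show ?thesis unfolding A'_def esf_def using True sum.remove[OF Suc.prems(1) lA, of "\<lambda>a. poly (Q a) y * exp ((l - a) * y)"]
        by simp
    qed (simp add: A'_def)
    have fA': "finite A'" using Suc.prems(1) A'_def by simp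
    have rest: "(\<Sum>a\<in>A - {l}. degree (Q a) + 1) \<le> (\<Sum>a\<in>A - {l}. degree (P a) + 1)"
      by (intro sum_mono) (simp add: Q_def degree_dP)
    have tot: "(\<Sum>a\<in>A. degree (P a) + 1) = degree (P l) + 1 + (\<Sum>a\<in>A - {l}. degree (P a) + 1)"
      using sum.remove[OF Suc.prems(1) lA, of "\<lambda>a. degree (P a) + 1"] by simp
    have bnd: "(\<Sum>a\<in>A'. degree (Q a) + 1) \<le> n"
    proof (cases "degree (P l) = 0")
      case True
      then show ?thesis using rest tot Suc.prems(2) A'_def by simp
    next
      case False
      have "(\<Sum>a\<in>A'. degree (Q a) + 1) = degree (Q l) + 1 + (\<Sum>a\<in>A - {l}. degree (Q a) + 1)"
        using sum.remove[OF Suc.prems(1) lA, of "\<lambda>a. degree (Q a) + 1"] A'_def False by simp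
      moreover have "degree (Q l) + 1 = degree (P l)" using Ql False by (simp add: degree_pderiv)
      ultimately show ?thesis using rest tot Suc.prems(2) by simp
    qed
    have z': "\<forall>z\<in>Z'. esf A' Q l z = 0" using Z'(3) eqA' Q_def by simp
    have d0: "esf A Q l y = 0" for y
      using Suc.IH[OF fA' bnd Z'(1) Z'(2) z'] eqA' by simp
    have "\<forall>y. (esf A P l has_real_derivative 0) (at y)"
      using esf_deriv[of A P l] d0 Q_def by simp
    then have const: "esf A P l y = esf A P l y'" for y y' using DERIV_isconst_all by blast
    have "Z \<noteq> {}" using Suc.prems(4) by auto
    then obtain z0 where "z0 \<in> Z" by blast
    then have "esf A P l x = 0" using const gz by metis
    then show ?thesis using esf_shift[of A P l x s] by simp
  qed
qed




definition kk :: "real list \<Rightarrow> nat \<Rightarrow> nat" where "kk h i = card {j. j < i \<and> h ! j = h ! i}"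
definition Sa :: "real list \<Rightarrow> real \<Rightarrow> nat set" where "Sa h a = {i. i < length h \<and> h ! i = a}"
definition mlt :: "real list \<Rightarrow> real \<Rightarrow> nat" where "mlt h a = card (Sa h a)"
definition PS :: "real list \<Rightarrow> (real \<Rightarrow> real) set" where
  "PS h = {esf (set h) P 0 | P. \<forall>a\<in>set h. degree (P a) < mlt h a}"

lemma rank_bij:
  fixes S :: "nat set"
  assumes "finite S"
  shows "bij_betw (\<lambda>i. card (S \<inter> {..<i})) S {..<card S}"
proof -
  have inj: "inj_on (\<lambda>i. card (S \<inter> {..<i})) S"
  proof (rule inj_onI)
    fix x y assume xy: "x \<in> S" "y \<in> S" "card (S \<inter> {..<x}) = card (S \<inter> {..<y})"
    show "x = y"
    proof (rule ccontr)
      assume "x \<noteq> y"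
      then consider "x < y" | "y < x" by linarith
      then show False
      proof cases
        case 1
        then have "S \<inter> {..<x} \<subset> S \<inter> {..<y}" using xy by auto
        then have "card (S \<inter> {..<x}) < card (S \<inter> {..<y})" using assms by (simp add: psubset_card_mono)
        then show False using xy by simp
      next
        case 2
        then have "S \<inter> {..<y} \<subset> S \<inter> {..<x}" using xy by auto
        then have "card (S \<inter> {..<y}) < card (S \<inter> {..<x})" using assms by (simp add: psubset_card_mono)
        then show False using xy by simp
      qed
    qed
  qed
  have sub: "(\<lambda>i. card (S \<inter> {..<i})) ` S \<subseteq> {..<card S}"
  proof
    fix y assume "y \<in> (\<lambda>i. card (S \<inter> {..<i})) ` S"
    then obtain i where i: "i \<in> S" "y = card (S \<inter> {..<i})" by blast
    have "S \<inter> {..<i} \<subset> S" using i by auto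
    then show "y \<in> {..<card S}" using i assms by (simp add: psubset_card_mono)
  qed
  have "card ((\<lambda>i. card (S \<inter> {..<i})) ` S) = card S" using card_image[OF inj] .
  then have "(\<lambda>i. card (S \<inter> {..<i})) ` S = {..<card S}"
    using sub by (simp add: card_subset_eq)
  then show ?thesis using inj by (simp add: bij_betw_def)
qed

lemma kk_Sa: "i \<in> Sa h a \<Longrightarrow> kk h i = card (Sa h a \<inter> {..<i})"
proof -
  assume i: "i \<in> Sa h a"
  have "{j. j < i \<and> h ! j = h ! i} = Sa h a \<inter> {..<i}" using i unfolding Sa_def by auto
  then show ?thesis unfolding kk_def by simp
qed

lemma kk_bij: "bij_betw (kk h) (Sa h a) {..<mlt h a}"
proof -
  have f: "finite (Sa h a)" unfolding Sa_def by simp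
  have "bij_betw (\<lambda>i. card (Sa h a \<inter> {..<i})) (Sa h a) {..<mlt h a}"
    using rank_bij[OF f] unfolding mlt_def .
  then show ?thesis using kk_Sa by (metis (no_types, lifting) bij_betw_cong)
qed

lemma poly_sum_lt: "degree (p::real poly) < n \<Longrightarrow> poly p x = (\<Sum>j<n. coeff p j * x ^ j)"
proof -
  assume a: "degree p < n"
  have "poly p x = (\<Sum>j\<le>degree p. coeff p j * x ^ j)" by (rule poly_altdef)
  also have "\<dots> = (\<Sum>j<n. coeff p j * x ^ j)"
    by (rule sum.mono_neutral_left) (use a in \<open>auto simp: coeff_eq_0\<close>)
  finally show ?thesis .
qed

lemma group_h: "(\<Sum>i<length h. f i) = (\<Sum>a\<in>set h. \<Sum>i\<in>Sa h a. f i)"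
proof -
  have "(\<Sum>a\<in>set h. \<Sum>i\<in>{x. x \<in> {..<length h} \<and> h ! x = a}. f i) = (\<Sum>i<length h. f i)"
    by (rule sum.group) auto
  moreover have "\<And>a. {x. x \<in> {..<length h} \<and> h ! x = a} = Sa h a" unfolding Sa_def by auto
  ultimately show ?thesis by simp
qed

lemma Pspace_sub: "p \<in> Pspace h \<Longrightarrow> p \<in> PS h"
proof -
  assume "p \<in> Pspace h"
  then obtain c where p: "p = (\<lambda>t. \<Sum>i<length h. c i * exp_basis h i t)" unfolding Pspace_def by blast
  define P where "P a = (\<Sum>i\<in>Sa h a. monom (c i) (kk h i))" for a
  have "p t = esf (set h) P 0 t" for t
  proof -
    have "p t = (\<Sum>a\<in>set h. \<Sum>i\<in>Sa h a. c i * exp_basis h i t)" using p group_h by simp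
    also have "\<dots> = (\<Sum>a\<in>set h. poly (P a) t * exp ((0 - a) * t))"
    proof (intro sum.cong refl)
      fix a
      have "poly (P a) t * exp ((0 - a) * t) = (\<Sum>i\<in>Sa h a. c i * t ^ kk h i * exp ((0 - a) * t))"
        unfolding P_def by (simp add: poly_sum poly_monom sum_distrib_right)
      also have "\<dots> = (\<Sum>i\<in>Sa h a. c i * exp_basis h i t)"
        by (intro sum.cong refl) (simp add: exp_basis_def kk_def Sa_def)
      finally show "(\<Sum>i\<in>Sa h a. c i * exp_basis h i t) = poly (P a) t * exp ((0 - a) * t)" by simp
    qed
    finally show ?thesis unfolding esf_def .
  qed
  then have pe: "p = esf (set h) P 0" by auto
  have "degree (P a) < mlt h a" if "a \<in> set h" for a
  proof -
    have ne: "Sa h a \<noteq> {}" using that unfolding Sa_def by (auto simp: in_set_conv_nth)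
    have fin: "finite (Sa h a)" unfolding Sa_def by simp
    have pos: "0 < mlt h a" using ne fin unfolding mlt_def by (simp add: card_gt_0_iff)
    have "degree (P a) \<le> mlt h a - 1"
      unfolding P_def
    proof (rule degree_sum_le[OF fin])
      fix i assume "i \<in> Sa h a"
      then have "kk h i < mlt h a" using kk_bij[of h a] by (auto simp: bij_betw_def)
      then show "degree (monom (c i) (kk h i)) \<le> mlt h a - 1"
        using degree_monom_le[of "c i" "kk h i"] by linarith
    qed
    then show ?thesis using pos by linarith
  qed
  then show "p \<in> PS h" unfolding PS_def using pe by blast
qed

lemma Pspace_sup: "p \<in> PS h \<Longrightarrow> p \<in> Pspace h"
proof -
  assume "p \<in> PS h"
  then obtain P where p: "p = esf (set h) P 0" and deg: "\<forall>a\<in>set h. degree (P a) < mlt h a"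
    unfolding PS_def by blast
  define c where "c i = coeff (P (h ! i)) (kk h i)" for i
  have "p t = (\<Sum>i<length h. c i * exp_basis h i t)" for t
  proof -
    have "(\<Sum>i<length h. c i * exp_basis h i t) = (\<Sum>a\<in>set h. \<Sum>i\<in>Sa h a. c i * exp_basis h i t)"
      by (rule group_h)
    also have "\<dots> = (\<Sum>a\<in>set h. poly (P a) t * exp ((0 - a) * t))"
    proof (intro sum.cong refl)
      fix a assume a: "a \<in> set h"
      have "(\<Sum>i\<in>Sa h a. c i * exp_basis h i t) = (\<Sum>i\<in>Sa h a. coeff (P a) (kk h i) * t ^ (kk h i)) * exp ((0 - a) * t)"
        unfolding sum_distrib_right
        by (intro sum.cong refl) (simp add: exp_basis_def kk_def Sa_def c_def)
      also have "(\<Sum>i\<in>Sa h a. coeff (P a) (kk h i) * t ^ (kk h i)) = (\<Sum>j<mlt h a. coeff (P a) j * t ^ j)"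
        by (rule sum.reindex_bij_betw[OF kk_bij, of "\<lambda>j. coeff (P a) j * t ^ j"])
      also have "\<dots> = poly (P a) t" using poly_sum_lt deg a by metis
      finally show "(\<Sum>i\<in>Sa h a. c i * exp_basis h i t) = poly (P a) t * exp ((0 - a) * t)" .
    qed
    finally show ?thesis using p unfolding esf_def by simp
  qed
  then show "p \<in> Pspace h" unfolding Pspace_def by blast
qed

lemma Pspace_PS: "Pspace h = PS h" using Pspace_sub Pspace_sup by blast




lemma PS_esf: "p \<in> PS h \<Longrightarrow> \<exists>P. p = esf (set h) P 0 \<and> (\<forall>a\<in>set h. degree (P a) < mlt h a)"
  unfolding PS_def by blast

lemma PS_I: "(\<forall>a\<in>set h. degree (P a) < mlt h a) \<Longrightarrow> esf (set h) P 0 \<in> PS h"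
  unfolding PS_def by blast

lemma PS_deriv: "p \<in> PS h \<Longrightarrow> deriv p \<in> PS h"
proof -
  assume "p \<in> PS h"
  then obtain P where p: "p = esf (set h) P 0" "\<forall>a\<in>set h. degree (P a) < mlt h a" using PS_esf by blast
  have "deriv p = esf (set h) (dP P 0) 0" using p deriv_esf by simp
  moreover have "\<forall>a\<in>set h. degree (dP P 0 a) < mlt h a" using p(2) degree_dP le_less_trans by blast
  ultimately show ?thesis using PS_I by simp
qed

lemma PS_has_deriv: "p \<in> PS h \<Longrightarrow> (p has_real_derivative deriv p x) (at x)"
proof -
  assume "p \<in> PS h"
  then obtain P where p: "p = esf (set h) P 0" using PS_esf by blast
  show ?thesis using p esf_deriv deriv_esf by simp
qed

lemma PS_cont: "p \<in> PS h \<Longrightarrow> continuous_on S p"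
  using PS_esf esf_cont by blast

lemma PS_scale: "p \<in> PS h \<Longrightarrow> (\<lambda>x. c * p x) \<in> PS h"
proof -
  assume "p \<in> PS h"
  then obtain P where p: "p = esf (set h) P 0" "\<forall>a\<in>set h. degree (P a) < mlt h a" using PS_esf by blast
  have "(\<lambda>x. c * p x) = esf (set h) (\<lambda>a. smult c (P a)) 0"
    using p(1) by (auto simp: esf_def sum_distrib_left mult_ac)
  moreover have "\<forall>a\<in>set h. degree (smult c (P a)) < mlt h a" using p(2) degree_smult_le le_less_trans by blast
  ultimately show ?thesis using PS_I by simp
qed

lemma PS_diff: "p \<in> PS h \<Longrightarrow> q \<in> PS h \<Longrightarrow> (\<lambda>x. p x - q x) \<in> PS h"
proof -
  assume "p \<in> PS h" "q \<in> PS h"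
  then obtain P Q where p: "p = esf (set h) P 0" "\<forall>a\<in>set h. degree (P a) < mlt h a"
    and q: "q = esf (set h) Q 0" "\<forall>a\<in>set h. degree (Q a) < mlt h a" using PS_esf by metis
  have "(\<lambda>x. p x - q x) = esf (set h) (\<lambda>a. P a - Q a) 0"
    using p(1) q(1) by (auto simp: esf_def sum_subtractf[symmetric] algebra_simps)
  moreover have "\<forall>a\<in>set h. degree (P a - Q a) < mlt h a"
  proof
    fix a assume a: "a \<in> set h"
    have "degree (P a - Q a) \<le> max (degree (P a)) (degree (Q a))" by (rule degree_diff_le_max)
    moreover have "degree (P a) < mlt h a" "degree (Q a) < mlt h a" using p(2) q(2) a by auto
    ultimately show "degree (P a - Q a) < mlt h a" by linarith
  qed
  ultimately show ?thesis using PS_I by simp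
qed

lemma PS_shift: "p \<in> PS h \<Longrightarrow> (\<lambda>x. p (x + t)) \<in> PS h"
proof -
  assume "p \<in> PS h"
  then obtain P where p: "p = esf (set h) P 0" "\<forall>a\<in>set h. degree (P a) < mlt h a" using PS_esf by blast
  define Q where "Q a = smult (exp ((0 - a) * t)) (pcompose (P a) [:t, 1:])" for a
  have "(\<lambda>x. p (x + t)) = esf (set h) Q 0"
  proof
    fix x
    show "p (x + t) = esf (set h) Q 0 x"
      unfolding p(1) esf_def Q_def
    proof (intro sum.cong refl)
      fix a
      have "exp ((0 - a) * (x + t)) = exp ((0 - a) * t) * exp ((0 - a) * x)"
        by (simp add: mult_exp_exp algebra_simps)
      then show "poly (P a) (x + t) * exp ((0 - a) * (x + t)) =
        poly (smult (exp ((0 - a) * t)) (P a \<circ>\<^sub>p [:t, 1:])) x * exp ((0 - a) * x)"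
        by (simp add: poly_pcompose add.commute)
    qed
  qed
  moreover have "\<forall>a\<in>set h. degree (Q a) < mlt h a"
  proof
    fix a assume "a \<in> set h"
    have "degree (Q a) \<le> degree (pcompose (P a) [:t, 1:])" unfolding Q_def by (rule degree_smult_le)
    also have "\<dots> = degree (P a)" by (simp add: degree_pcompose)
    finally show "degree (Q a) < mlt h a" using p(2) \<open>a \<in> set h\<close> le_less_trans by blast
  qed
  ultimately show ?thesis using PS_I by simp
qed

lemma sum_mlt: "(\<Sum>a\<in>set h. mlt h a) = length h"
proof -
  have "(\<Sum>i<length h. (1::nat)) = (\<Sum>a\<in>set h. \<Sum>i\<in>Sa h a. 1)" by (rule group_h)
  then show ?thesis unfolding mlt_def by simp
qed

lemma PS_zeros:
  assumes "p \<in> PS h" "finite Z" "length h \<le> card Z" "\<forall>z\<in>Z. p z = 0"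
  shows "p x = 0"
proof -
  obtain P where p: "p = esf (set h) P 0" "\<forall>a\<in>set h. degree (P a) < mlt h a" using PS_esf assms(1) by blast
  have "(\<Sum>a\<in>set h. degree (P a) + 1) \<le> (\<Sum>a\<in>set h. mlt h a)"
    by (intro sum_mono) (use p(2) in auto)
  then have "(\<Sum>a\<in>set h. degree (P a) + 1) \<le> length h" using sum_mlt by simp
  from esf_zeros[OF _ this assms(2) assms(3)] assms(4) p(1) show ?thesis by simp
qed

lemma pow_le_exp: "0 \<le> (y::real) \<Longrightarrow> y ^ j / fact j \<le> exp y"
proof -
  assume y: "0 \<le> y"
  have s: "(\<lambda>n. y ^ n / fact n) sums exp y" using exp_converges[of y] by (simp add: divide_inverse mult.commute)
  have "sum (\<lambda>n. y ^ n / fact n) {j} \<le> suminf (\<lambda>n. y ^ n / fact n)"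
    by (rule sum_le_suminf) (use s y in \<open>auto simp: sums_iff\<close>)
  then show ?thesis using s by (simp add: sums_iff)
qed

lemma pe_bound:
  fixes c x :: real
  assumes "0 < c" "0 \<le> x"
  shows "x ^ j * exp (- c * x) \<le> fact j / c ^ j"
proof -
  have "(c * x) ^ j / fact j \<le> exp (c * x)" using pow_le_exp[of "c * x" j] assms by simp
  then have "c ^ j * x ^ j \<le> fact j * exp (c * x)"
    by (simp add: power_mult_distrib divide_le_eq mult.commute)
  then have "x ^ j \<le> fact j * exp (c * x) / c ^ j" using assms by (simp add: le_divide_eq mult.commute)
  then have "x ^ j * exp (- c * x) \<le> fact j * exp (c * x) / c ^ j * exp (- c * x)"
    by (rule mult_right_mono) simp
  also have "\<dots> = fact j / c ^ j" by (simp add: exp_minus field_simps)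
  finally show ?thesis .
qed

lemma esf_bound:
  assumes "\<forall>a\<in>A. 0 < a" "0 \<le> x"
  shows "\<bar>esf A P 0 x\<bar> \<le> (\<Sum>a\<in>A. \<Sum>j\<le>degree (P a). \<bar>coeff (P a) j\<bar> * (fact j / a ^ j))"
proof -
  have "\<bar>esf A P 0 x\<bar> \<le> (\<Sum>a\<in>A. \<bar>poly (P a) x * exp ((0 - a) * x)\<bar>)"
    unfolding esf_def by (rule sum_abs)
  also have "\<dots> \<le> (\<Sum>a\<in>A. \<Sum>j\<le>degree (P a). \<bar>coeff (P a) j\<bar> * (fact j / a ^ j))"
  proof (rule sum_mono)
    fix a assume a: "a \<in> A"
    have "\<bar>poly (P a) x * exp ((0 - a) * x)\<bar> = \<bar>\<Sum>j\<le>degree (P a). coeff (P a) j * (x ^ j * exp (- a * x))\<bar>"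
      by (simp add: poly_altdef sum_distrib_right sum_distrib_left mult_ac)
    also have "\<dots> \<le> (\<Sum>j\<le>degree (P a). \<bar>coeff (P a) j * (x ^ j * exp (- a * x))\<bar>)" by (rule sum_abs)
    also have "\<dots> \<le> (\<Sum>j\<le>degree (P a). \<bar>coeff (P a) j\<bar> * (fact j / a ^ j))"
    proof (rule sum_mono)
      fix j
      have "\<bar>coeff (P a) j * (x ^ j * exp (- a * x))\<bar> = \<bar>coeff (P a) j\<bar> * (x ^ j * exp (- a * x))"
        using assms(2) by (simp add: abs_mult)
      also have "\<dots> \<le> \<bar>coeff (P a) j\<bar> * (fact j / a ^ j)"
        by (rule mult_left_mono) (use pe_bound assms a in auto)
      finally show "\<bar>coeff (P a) j * (x ^ j * exp (- a * x))\<bar> \<le> \<bar>coeff (P a) j\<bar> * (fact j / a ^ j)" .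
    qed
    finally show "\<bar>poly (P a) x * exp ((0 - a) * x)\<bar> \<le> (\<Sum>j\<le>degree (P a). \<bar>coeff (P a) j\<bar> * (fact j / a ^ j))" .
  qed
  finally show ?thesis .
qed

lemma PS_bounded:
  assumes "\<forall>a\<in>set h. 0 < a" "p \<in> PS h"
  shows "\<exists>B. \<forall>x\<ge>0. \<bar>p x\<bar> \<le> B"
proof -
  obtain P where p: "p = esf (set h) P 0" using PS_esf assms(2) by blast
  show ?thesis using esf_bound[OF assms(1)] p by blast
qed

lemma sup_norm_le_iff:
  assumes "\<exists>B. \<forall>x\<ge>0. \<bar>p x\<bar> \<le> B"
  shows "sup_norm p \<le> c \<longleftrightarrow> (\<forall>x\<ge>0. \<bar>p x\<bar> \<le> c)"
proof -
  have bdd: "bdd_above ((\<lambda>t. \<bar>p t\<bar>) ` {0..})" using assms by (auto simp: bdd_above_def)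
  show ?thesis
  proof
    assume "sup_norm p \<le> c"
    then show "\<forall>x\<ge>0. \<bar>p x\<bar> \<le> c" unfolding sup_norm_def
      using cSUP_upper[OF _ bdd] by (meson atLeast_iff order_trans)
  next
    assume "\<forall>x\<ge>0. \<bar>p x\<bar> \<le> c"
    then show "sup_norm p \<le> c" unfolding sup_norm_def by (intro cSUP_least) auto
  qed
qed

lemma sup_norm_ge:
  assumes "\<exists>B. \<forall>x\<ge>0. \<bar>p x\<bar> \<le> B" "0 \<le> x"
  shows "\<bar>p x\<bar> \<le> sup_norm p"
  using sup_norm_le_iff[OF assms(1)] assms(2) by blast




lemma ivt_sign:
  fixes f :: "real \<Rightarrow> real"
  assumes "a < b" "continuous_on {a..b} f" "f a * f b < 0"
  shows "\<exists>z. a < z \<and> z < b \<and> f z = 0"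
proof -
  have "f a < 0 \<and> 0 < f b \<or> f a > 0 \<and> 0 > f b" using assms(3) by (auto simp add: mult_less_0_iff)
  then obtain z where z: "a \<le> z" "z \<le> b" "f z = 0"
    using IVT'[of f a 0 b] IVT2'[of f b 0 a] assms(1,2) by force
  then have "z \<noteq> a" "z \<noteq> b" using assms(3) by auto
  then have "a < z" "z < b" using z by auto
  then show ?thesis using z(3) by blast
qed

lemma chain_mono:
  fixes f :: "nat \<Rightarrow> real"
  assumes "\<forall>j\<in>{1..<d}. f j < f (Suc j)"
  shows "1 \<le> i \<Longrightarrow> i < j \<Longrightarrow> j \<le> d \<Longrightarrow> f i < f j"
proof (induction j)
  case 0 then show ?case by simp
next
  case (Suc j)
  show ?case
  proof (cases "i = j")
    case True
    then show ?thesis using assms Suc.prems by auto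
  next
    case False
    then have "f i < f j" using Suc by simp
    moreover have "f j < f (Suc j)" using assms Suc.prems False by auto
    ultimately show ?thesis by simp
  qed
qed

locale cheb =
  fixes h :: "real list" and T :: "real \<Rightarrow> real" and \<nu> :: "nat \<Rightarrow> real"
  assumes d2: "2 \<le> length h"
    and hpos: "\<forall>a\<in>set h. 0 < a"
    and TPS: "T \<in> PS h"
    and Tn: "sup_norm T = 1"
    and nu1: "\<nu> 1 = 0"
    and nuinc: "\<forall>j\<in>{1..<length h}. \<nu> j < \<nu> (Suc j)"
    and Talt: "\<forall>j\<in>{1..length h}. T (\<nu> j) = (-1)^j"
begin

abbreviation "d \<equiv> length h"
abbreviation "T1 \<equiv> deriv T"
abbreviation "T2 \<equiv> deriv T1"

lemma bdd: "p \<in> PS h \<Longrightarrow> \<exists>B. \<forall>x\<ge>0. \<bar>p x\<bar> \<le> B"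
  using PS_bounded hpos by blast

lemma Tb: "0 \<le> x \<Longrightarrow> \<bar>T x\<bar> \<le> 1"
  using sup_norm_le_iff[OF bdd[OF TPS], of 1] Tn by simp

lemma T1PS: "T1 \<in> PS h" using PS_deriv TPS by blast
lemma T2PS: "T2 \<in> PS h" using PS_deriv T1PS by blast
lemma Tder: "(T has_real_derivative T1 x) (at x)" using PS_has_deriv TPS by blast
lemma T1der: "(T1 has_real_derivative T2 x) (at x)" using PS_has_deriv T1PS by blast
lemma Tcont: "continuous_on S T" using PS_cont TPS by blast
lemma T1cont: "continuous_on S T1" using PS_cont T1PS by blast
lemma T2cont: "continuous_on S T2" using PS_cont T2PS by blast

lemma T0: "T 0 = -1" using Talt nu1 d2 by force
lemma Tnu2: "T (\<nu> 2) = 1" using Talt d2 by force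

lemma nu_lt: "1 \<le> i \<Longrightarrow> i < j \<Longrightarrow> j \<le> d \<Longrightarrow> \<nu> i < \<nu> j"
  using chain_mono[OF nuinc] by blast

lemma nu_pos: "2 \<le> j \<Longrightarrow> j \<le> d \<Longrightarrow> 0 < \<nu> j"
  using nu_lt[of 1 j] nu1 by simp

lemma nu2_le: "2 \<le> j \<Longrightarrow> j \<le> d \<Longrightarrow> \<nu> 2 \<le> \<nu> j"
  using nu_lt[of 2 j] by (cases "j = 2") auto

lemma nu2pos: "0 < \<nu> 2" using nu_pos d2 by simp

lemma T1_nu: assumes "2 \<le> j" "j \<le> d" shows "T1 (\<nu> j) = 0"
proof -
  have pos: "0 < \<nu> j" using nu_pos assms by simp
  have loc: "\<forall>y. \<bar>\<nu> j - y\<bar> < \<nu> j \<longrightarrow> \<bar>T y\<bar> \<le> 1" using Tb by auto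
  have v: "T (\<nu> j) = (-1)^j" using Talt assms by simp
  show ?thesis
  proof (cases "even j")
    case True
    then have "T (\<nu> j) = 1" using v by simp
    then have "\<forall>y. \<bar>\<nu> j - y\<bar> < \<nu> j \<longrightarrow> T y \<le> T (\<nu> j)" using loc by (metis abs_le_D1)
    then show ?thesis using DERIV_local_max[OF Tder pos] by blast
  next
    case False
    then have "T (\<nu> j) = -1" using v by simp
    then have "\<forall>y. \<bar>\<nu> j - y\<bar> < \<nu> j \<longrightarrow> T (\<nu> j) \<le> T y" using loc by (metis abs_le_D2 minus_le_iff)
    then show ?thesis using DERIV_local_min[OF Tder pos] by blast
  qed
qed

lemma T_nonconst: "\<not> (\<forall>x. T1 x = 0)"
proof
  assume "\<forall>x. T1 x = 0"
  then have "\<forall>x. (T has_real_derivative 0) (at x)" using Tder by metis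
  then have "T 0 = T (\<nu> 2)" using DERIV_isconst_all by blast
  then show False using T0 Tnu2 by simp
qed

lemma T1_nz: assumes "0 < w" "w < \<nu> 2" shows "T1 w \<noteq> 0"
proof
  assume w0: "T1 w = 0"
  define Z where "Z = insert w (\<nu> ` {2..d})"
  have inj: "inj_on \<nu> {2..d}"
  proof (rule inj_onI)
    fix i j assume "i \<in> {2..d}" "j \<in> {2..d}" "\<nu> i = \<nu> j"
    then have ij: "1 \<le> i" "i \<le> d" "1 \<le> j" "j \<le> d" "\<nu> i = \<nu> j" by auto
    show "i = j"
    proof (rule ccontr)
      assume "i \<noteq> j"
      then consider "i < j" | "j < i" by linarith
      then show False
      proof cases
        case 1 then show False using nu_lt[of i j] ij by simp
      next
        case 2 then show False using nu_lt[of j i] ij by simp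
      qed
    qed
  qed
  have "w \<notin> \<nu> ` {2..d}" using assms nu2_le by force
  then have "card Z = Suc (card {2..d})" using inj by (simp add: Z_def card_image)
  then have cZ: "d \<le> card Z" using d2 by simp
  have "\<forall>z\<in>Z. T1 z = 0" using w0 T1_nu Z_def by auto
  then have "\<forall>x. T1 x = 0" using PS_zeros[OF T1PS _ cZ] Z_def by blast
  then show False using T_nonconst by blast
qed

lemma T1_pos: assumes "0 < w" "w < \<nu> 2" shows "0 < T1 w"
proof -
  obtain \<xi> where xi: "0 < \<xi>" "\<xi> < \<nu> 2" "T (\<nu> 2) - T 0 = (\<nu> 2 - 0) * T1 \<xi>"
    using MVT2[OF nu2pos, of T T1] Tder by blast
  have "\<nu> 2 * T1 \<xi> = 2" using xi T0 Tnu2 by simp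
  then have "0 < T1 \<xi>" using nu2pos by (smt (verit, best) mult_nonneg_nonpos)
  show ?thesis
  proof (rule ccontr)
    assume "\<not> 0 < T1 w"
    then have neg: "T1 w < 0" using T1_nz assms by force
    have "T1 w * T1 \<xi> < 0" using neg \<open>0 < T1 \<xi>\<close> by (simp add: mult_neg_pos)
    moreover have "w \<noteq> \<xi>" using neg \<open>0 < T1 \<xi>\<close> by auto
    then consider "w < \<xi>" | "\<xi> < w" by linarith
    then show False
    proof cases
      case 1
      then obtain z where "w < z" "z < \<xi>" "T1 z = 0"
        using ivt_sign[of w \<xi> T1] T1cont \<open>T1 w * T1 \<xi> < 0\<close> by blast
      then show False using T1_nz[of z] assms xi by simp
    next
      case 2
      have "T1 \<xi> * T1 w < 0" using \<open>T1 w * T1 \<xi> < 0\<close> by (simp add: mult.commute)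
      then obtain z where "\<xi> < z" "z < w" "T1 z = 0"
        using ivt_sign[of \<xi> w T1] T1cont 2 by blast
      then show False using T1_nz[of z] assms xi by simp
    qed
  qed
qed

lemma T1_0: "0 \<le> T1 0"
proof (rule ccontr)
  assume "\<not> 0 \<le> T1 0"
  then have "T1 0 * T1 (\<nu> 2 / 2) < 0" using T1_pos[of "\<nu> 2 / 2"] nu2pos by (simp add: mult_neg_pos)
  then obtain z where "0 < z" "z < \<nu> 2 / 2" "T1 z = 0"
    using ivt_sign[of 0 "\<nu> 2 / 2" T1] T1cont nu2pos by auto
  then show False using T1_nz by simp
qed

lemma T1_nonneg: "0 \<le> t \<Longrightarrow> t \<le> \<nu> 2 \<Longrightarrow> 0 \<le> T1 t"
proof -
  assume a: "0 \<le> t" "t \<le> \<nu> 2"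
  consider "t = 0" | "t = \<nu> 2" | "0 < t \<and> t < \<nu> 2" using a by linarith
  then show "0 \<le> T1 t"
  proof cases
    case 1 then show ?thesis using T1_0 by simp
  next
    case 2 then show ?thesis using T1_nu[of 2] d2 by simp
  next
    case 3 then show ?thesis using T1_pos[of t] by simp
  qed
qed

lemma T_strict: assumes "0 \<le> x" "x < y" "y \<le> \<nu> 2" shows "T x < T y"
proof -
  obtain z where z: "x < z" "z < y" "T y - T x = (y - x) * T1 z"
    using MVT2[OF assms(2), of T T1] Tder by blast
  have "0 < T1 z" using T1_pos z assms by simp
  then have "0 < (y - x) * T1 z" using z by simp
  then show ?thesis using z(3) by linarith
qed

lemma T_inj: "inj_on T {0..\<nu> 2}"
proof (rule inj_onI)
  fix x y assume "x \<in> {0..\<nu> 2}" "y \<in> {0..\<nu> 2}" "T x = T y"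
  then show "x = y" using T_strict[of x y] T_strict[of y x] by (cases x y rule: linorder_cases) auto
qed

lemma T_onto: "-1 \<le> y \<Longrightarrow> y \<le> 1 \<Longrightarrow> \<exists>t. 0 \<le> t \<and> t \<le> \<nu> 2 \<and> T t = y"
proof -
  assume "-1 \<le> y" "y \<le> 1"
  then show ?thesis using IVT'[of T 0 y "\<nu> 2"] T0 Tnu2 nu2pos Tcont by simp
qed

lemma T_image: "T ` {0..\<nu> 2} = {-1..1}"
proof
  show "T ` {0..\<nu> 2} \<subseteq> {-1..1}" using Tb by (auto simp: abs_le_iff)
  show "{-1..1} \<subseteq> T ` {0..\<nu> 2}" using T_onto by force
qed

end



lemma deriv_scale: "p \<in> PS h \<Longrightarrow> deriv (\<lambda>x. c * p x) x = c * deriv p x"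
proof -
  assume p: "p \<in> PS h"
  have "((\<lambda>x. c * p x) has_real_derivative c * deriv p x) (at x)"
    using DERIV_cmult[OF PS_has_deriv[OF p]] by simp
  then show ?thesis using DERIV_imp_deriv by blast
qed

lemma deriv_shift: "p \<in> PS h \<Longrightarrow> deriv (\<lambda>x. p (x + t)) x = deriv p (x + t)"
proof -
  assume "p \<in> PS h"
  then have "(p has_real_derivative deriv p (x + t)) (at (x + t))" using PS_has_deriv by blast
  then have "((\<lambda>x. p (x + t)) has_real_derivative deriv p (x + t)) (at x)" using DERIV_shift by blast
  then show ?thesis using DERIV_imp_deriv by blast
qed

context cheb begin

lemma cmp_strict:
  assumes s: "0 \<le> s" "s < \<nu> 2" and q: "q \<in> PS h" "\<forall>x\<ge>0. \<bar>q x\<bar> < 1" "q 0 = T s"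
  shows "deriv q 0 \<le> T1 s"
proof (rule ccontr)
  assume "\<not> ?thesis"
  then have lt: "T1 s < deriv q 0" by simp
  define r where "r x = T (x + s) - q x" for x
  have rPS: "r \<in> PS h"
    using PS_diff[OF PS_shift[OF TPS, of s] q(1)] unfolding r_def[abs_def] .
  have "((\<lambda>x. T (x + s)) has_real_derivative T1 (0 + s)) (at 0)"
    using Tder[of "0 + s"] DERIV_shift by blast
  then have rd: "(r has_real_derivative (T1 s - deriv q 0)) (at 0)"
    unfolding r_def[abs_def] using DERIV_diff PS_has_deriv[OF q(1)] by fastforce
  have r0: "r 0 = 0" using q(3) r_def by simp
  obtain \<delta> where dl: "\<delta> > 0" "\<forall>e>0. e < \<delta> \<longrightarrow> r 0 > r (0 + e)"
    using DERIV_neg_dec_right[OF rd] lt by auto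
  define x0 where "x0 = min (\<delta> / 2) ((\<nu> 2 - s) / 2)"
  have x0le: "x0 \<le> (\<nu> 2 - s) / 2" "x0 \<le> \<delta> / 2" unfolding x0_def by (rule min.cobounded2, rule min.cobounded1)
  have x0: "0 < x0" "x0 < \<nu> 2 - s" using dl(1) s x0le by (simp_all add: x0_def)
  have "x0 < \<delta>" using x0le dl(1) by linarith
  then have "r (0 + x0) < r 0" using dl(2) x0(1) by blast
  then have rx0: "r x0 < 0" using r0 by simp
  define y where "y j = (if j = 1 then x0 else \<nu> j - s)" for j
  have sgn: "(-1)^j * r (y j) > 0" if "j \<in> {1..d}" for j
  proof (cases "j = 1")
    case True then show ?thesis using rx0 y_def by simp
  next
    case False
    then have j2: "2 \<le> j" "j \<le> d" using that by auto
    have yj: "y j = \<nu> j - s" using False y_def by simp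
    have nn: "0 \<le> \<nu> j - s" using nu2_le[OF j2] s by simp
    have e: "r (y j) = (-1)^j - q (\<nu> j - s)" using yj r_def Talt j2 by simp
    have pm: "(-1::real)^j * (-1)^j = 1" by (simp flip: power_mult_distrib)
    have "(-1)^j * r (y j) = (-1)^j * (-1)^j - (-1)^j * q (\<nu> j - s)"
      unfolding e by (simp add: right_diff_distrib)
    then have "(-1)^j * r (y j) = 1 - (-1)^j * q (\<nu> j - s)" using pm by simp
    moreover have "\<bar>(-1)^j * q (\<nu> j - s)\<bar> < 1" using q(2) nn by (simp add: abs_mult)
    ultimately show ?thesis by (simp add: abs_less_iff)
  qed
  have yinc: "\<forall>j\<in>{1..<d}. y j < y (Suc j)"
  proof
    fix j assume j: "j \<in> {1..<d}"
    show "y j < y (Suc j)"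
    proof (cases "j = 1")
      case True
      have "\<nu> 2 = \<nu> (Suc (Suc 0))" by (simp only: numeral_2_eq_2)
      then show ?thesis using x0 y_def True by simp
    next
      case False then show ?thesis using nuinc j y_def by simp
    qed
  qed
  have rcont: "continuous_on S r" for S using PS_cont[OF rPS] .
  have zex: "\<forall>j\<in>{1..<d}. \<exists>z. y j < z \<and> z < y (Suc j) \<and> r z = 0"
  proof
    fix j assume j: "j \<in> {1..<d}"
    have A: "(-1)^j * r (y j) > 0" using sgn j by simp
    have B: "(-1)^(Suc j) * r (y (Suc j)) > 0" using sgn[of "Suc j"] j by (simp del: power_Suc)
    have "((-1)^j * r (y j)) * ((-1)^(Suc j) * r (y (Suc j))) > 0" using mult_pos_pos[OF A B] .
    moreover have "((-1)^j * r (y j)) * ((-1)^(Suc j) * r (y (Suc j))) = - (r (y j) * r (y (Suc j)))"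
    proof -
      have pm: "(-1::real)^j * (-1)^j = 1" by (simp flip: power_mult_distrib)
      have "((-1)^j * r (y j)) * ((-1)^(Suc j) * r (y (Suc j))) =
            - (((-1::real)^j * (-1)^j) * (r (y j) * r (y (Suc j))))" by (simp add: algebra_simps)
      then show ?thesis using pm by simp
    qed
    ultimately have "r (y j) * r (y (Suc j)) < 0" by linarith
    then show "\<exists>z. y j < z \<and> z < y (Suc j) \<and> r z = 0"
      using ivt_sign[OF _ rcont] yinc j by blast
  qed
  then obtain zf where zf: "\<forall>j\<in>{1..<d}. y j < zf j \<and> zf j < y (Suc j) \<and> r (zf j) = 0"
    by metis
  have yle: "y i \<le> y j" if "1 \<le> i" "i \<le> j" "j \<le> d" for i j
    using chain_mono[OF yinc, of i j] that by (cases "i = j") auto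
  have inj: "inj_on zf {1..<d}"
  proof (rule inj_onI)
    fix i j assume ij: "i \<in> {1..<d}" "j \<in> {1..<d}" "zf i = zf j"
    show "i = j"
    proof (rule ccontr)
      assume "i \<noteq> j"
      then consider "i < j" | "j < i" by linarith
      then show False
      proof cases
        case 1
        have "zf i < y (Suc i)" using zf ij(1) by blast
        also have "\<dots> \<le> y j" using yle[of "Suc i" j] 1 ij by simp
        also have "\<dots> < zf j" using zf ij(2) by blast
        finally show False using ij(3) by simp
      next
        case 2
        have "zf j < y (Suc j)" using zf ij(2) by blast
        also have "\<dots> \<le> y i" using yle[of "Suc j" i] 2 ij by simp
        also have "\<dots> < zf i" using zf ij(1) by blast
        finally show False using ij(3) by simp
      qed
    qed
  qed
  have n0: "0 \<notin> zf ` {1..<d}"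
  proof
    assume "0 \<in> zf ` {1..<d}"
    then obtain j where j: "j \<in> {1..<d}" "0 = zf j" by (rule imageE)
    have "y 1 \<le> y j" using yle[of 1 j] j by simp
    then show False using zf j x0 y_def by force
  qed
  define Z where "Z = insert 0 (zf ` {1..<d})"
  have "card Z = Suc (d - 1)" using inj n0 by (simp add: Z_def card_image)
  then have cZ: "d \<le> card Z" by simp
  have "\<forall>z\<in>Z. r z = 0" using zf r0 Z_def by auto
  then have "\<forall>x. r x = 0" using PS_zeros[OF rPS _ cZ] Z_def by blast
  then have "r = (\<lambda>x. 0)" by auto
  then have "(r has_real_derivative 0) (at 0)" by simp
  then have "T1 s - deriv q 0 = 0" using DERIV_unique rd by blast
  then show False using lt by simp
qed

definition "ginv = the_inv_into {0..\<nu> 2} T"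

lemma ginv: "-1 \<le> y \<Longrightarrow> y \<le> 1 \<Longrightarrow> 0 \<le> ginv y \<and> ginv y \<le> \<nu> 2 \<and> T (ginv y) = y"
proof -
  assume "-1 \<le> y" "y \<le> 1"
  then have yi: "y \<in> T ` {0..\<nu> 2}" using T_image by simp
  have "ginv y \<in> {0..\<nu> 2}" unfolding ginv_def by (rule the_inv_into_into[OF T_inj yi]) simp
  moreover have "T (ginv y) = y" unfolding ginv_def by (rule f_the_inv_into_f[OF T_inj yi])
  ultimately show ?thesis by simp
qed

lemma ginv_T: "0 \<le> t \<Longrightarrow> t \<le> \<nu> 2 \<Longrightarrow> ginv (T t) = t"
  unfolding ginv_def using the_inv_into_f_f[OF T_inj] by simp

lemma ginv_cont: "continuous_on {-1..1} ginv"
proof -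
  have "continuous_on (T ` {0..\<nu> 2}) ginv"
    unfolding ginv_def by (rule continuous_on_inv[OF Tcont compact_Icc]) (use the_inv_into_f_f[OF T_inj] in auto)
  then show ?thesis using T_image by simp
qed

lemma cmp:
  assumes q: "q \<in> PS h" "\<forall>x\<ge>0. \<bar>q x\<bar> \<le> 1" and t: "0 \<le> t" "t \<le> \<nu> 2" "T t = q 0"
  shows "deriv q 0 \<le> T1 t"
proof (cases "q 0 = 1")
  case True
  then have "T t = T (\<nu> 2)" using t Tnu2 by simp
  then have "t = \<nu> 2" using inj_onD[OF T_inj] t nu2pos by simp
  then have T1t: "T1 t = 0" using T1_nu[of 2] d2 by simp
  have "deriv q 0 \<le> 0"
  proof (rule ccontr)
    assume "\<not> deriv q 0 \<le> 0"
    then have "0 < deriv q 0" by simp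
    from DERIV_pos_inc_right[OF PS_has_deriv[OF q(1)] this]
    obtain e where "e > 0" "\<forall>h>0. h < e \<longrightarrow> q 0 < q (0 + h)" by blast
    then have "q 0 < q (0 + e / 2)" by simp
    then have "q 0 < q (e / 2)" by simp
    moreover have "\<bar>q (e / 2)\<bar> \<le> 1" using q(2) \<open>e > 0\<close> by simp
    ultimately show False using True by simp
  qed
  then show ?thesis using T1t by simp
next
  case False
  define y where "y = q 0"
  have yb: "-1 \<le> y" "y < 1" using q(2) False y_def by (auto simp: abs_le_iff)
  show ?thesis
  proof (rule ccontr)
    assume "\<not> ?thesis"
    then have lt: "T1 t < deriv q 0" by simp
    define \<phi> where "\<phi> \<delta> = (1 - \<delta>) * deriv q 0 - T1 (ginv ((1 - \<delta>) * y))" for \<delta>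
    have sub: "(\<lambda>\<delta>. (1 - \<delta>) * y) ` {0..1} \<subseteq> {-1..1}"
    proof
      fix z assume "z \<in> (\<lambda>\<delta>. (1 - \<delta>) * y) ` {0..1}"
      then obtain \<delta> where dd: "0 \<le> \<delta>" "\<delta> \<le> 1" "z = (1 - \<delta>) * y" by auto
      have "\<bar>z\<bar> \<le> \<bar>y\<bar>" using dd by (simp add: abs_mult mult_left_le_one_le)
      then show "z \<in> {-1..1}" using yb by (auto simp: abs_le_iff)
    qed
    have c1: "continuous_on {0..1} (\<lambda>\<delta>. ginv ((1 - \<delta>) * y))"
      by (rule continuous_on_compose2[OF ginv_cont _ sub]) (intro continuous_intros)
    have c2: "continuous_on {0..1} (\<lambda>\<delta>. T1 (ginv ((1 - \<delta>) * y)))"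
      by (rule continuous_on_compose2[OF T1cont[of UNIV] c1]) simp
    have cphi: "continuous_on {0..1} \<phi>" unfolding \<phi>_def by (intro continuous_intros c2)
    have "ginv y = t" using ginv_T[OF t(1,2)] t(3) y_def by simp
    then have "\<phi> 0 = deriv q 0 - T1 t" unfolding \<phi>_def by simp
    then have phi0: "\<phi> 0 > 0" using lt by simp
    obtain \<rho> where rho: "\<rho> > 0" "\<forall>x'\<in>{0..1}. dist x' 0 < \<rho> \<longrightarrow> dist (\<phi> x') (\<phi> 0) < \<phi> 0"
    proof -
      have "\<forall>x\<in>{0..1}. \<forall>e>0. \<exists>d>0. \<forall>x'\<in>{0..1}. dist x' x < d \<longrightarrow> dist (\<phi> x') (\<phi> x) < e"
        using cphi unfolding continuous_on_iff .
      moreover have "(0::real) \<in> {0..1}" by simp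
      ultimately have "\<forall>e>0. \<exists>d>0. \<forall>x'\<in>{0..1}. dist x' 0 < d \<longrightarrow> dist (\<phi> x') (\<phi> 0) < e"
        by blast
      then have "\<exists>d>0. \<forall>x'\<in>{0..1}. dist x' 0 < d \<longrightarrow> dist (\<phi> x') (\<phi> 0) < \<phi> 0"
        using phi0 by blast
      then show ?thesis using that by blast
    qed
    define \<delta> where "\<delta> = min (\<rho> / 2) (1 / 2)"
    have dd: "0 < \<delta>" "\<delta> < 1" "\<delta> < \<rho>" using rho by (auto simp: \<delta>_def)
    have "dist (\<phi> \<delta>) (\<phi> 0) < \<phi> 0" using rho dd by (simp add: dist_real_def)
    then have phid: "\<phi> \<delta> > 0" by (simp add: dist_real_def abs_less_iff)
    define s where "s = ginv ((1 - \<delta>) * y)"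
    have "(\<lambda>\<delta>. (1 - \<delta>) * y) \<delta> \<in> (\<lambda>\<delta>. (1 - \<delta>) * y) ` {0..1}" by (rule imageI) (use dd in simp)
    then have "(1 - \<delta>) * y \<in> {-1..1}" using sub by blast
    then have "-1 \<le> (1 - \<delta>) * y" "(1 - \<delta>) * y \<le> 1" by simp_all
    from ginv[OF this] have s: "0 \<le> s" "s \<le> \<nu> 2" "T s = (1 - \<delta>) * y" unfolding s_def by simp_all
    have "(1 - \<delta>) * y < 1"
    proof (cases "y \<le> 0")
      case True
      have "0 \<le> 1 - \<delta>" using dd by simp
      then have "(1 - \<delta>) * y \<le> 0" using True by (rule mult_nonneg_nonpos)
      then show ?thesis by simp
    next
      case False
      then have "(1 - \<delta>) * y \<le> y" using dd by (simp add: mult_left_le_one_le)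
      then show ?thesis using yb by simp
    qed
    then have "s \<noteq> \<nu> 2" using s Tnu2 by auto
    then have slt: "s < \<nu> 2" using s by simp
    define qd where "qd x = (1 - \<delta>) * q x" for x
    have qdPS: "qd \<in> PS h" using PS_scale[OF q(1)] unfolding qd_def[abs_def] .
    have qdb: "\<forall>x\<ge>0. \<bar>qd x\<bar> < 1"
    proof (intro allI impI)
      fix x :: real assume "0 \<le> x"
      then have "\<bar>q x\<bar> \<le> 1" using q(2) by simp
      then have "\<bar>qd x\<bar> \<le> (1 - \<delta>)" using dd by (simp add: qd_def abs_mult mult_left_le_one_le)
      then show "\<bar>qd x\<bar> < 1" using dd by simp
    qed
    have "qd 0 = T s" using s(3) y_def qd_def by simp
    then have "deriv qd 0 \<le> T1 s" using cmp_strict[OF s(1) slt qdPS qdb] by simp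
    moreover have "deriv qd 0 = (1 - \<delta>) * deriv q 0" unfolding qd_def[abs_def] using deriv_scale[OF q(1)] .
    ultimately have "\<phi> \<delta> \<le> 0" unfolding \<phi>_def s_def by simp
    then show False using phid by simp
  qed
qed

end



context cheb begin

definition "Sset \<epsilon> = {(1 - T t) / (deriv T t - \<epsilon> * T t) | t. t \<in> {0..\<nu> 2} \<and> deriv T t > \<epsilon> * T t}"
definition "Kset \<epsilon> = {(1 - p 0) / (deriv p 0 - \<epsilon> * p 0) | p.
      p \<in> Pspace h \<and> sup_norm p \<le> 1 \<and> deriv p 0 > \<epsilon> * p 0}"

lemma PSb: "p \<in> PS h \<Longrightarrow> sup_norm p \<le> 1 \<Longrightarrow> 0 \<le> x \<Longrightarrow> \<bar>p x\<bar> \<le> 1"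
  using sup_norm_le_iff[OF bdd, of p 1] by blast

lemma S_ne: "0 < \<epsilon> \<Longrightarrow> (1 - T 0) / (T1 0 - \<epsilon> * T 0) \<in> Sset \<epsilon>"
proof -
  assume e: "0 < \<epsilon>"
  have "T1 0 > \<epsilon> * T 0" using T1_0 T0 e by simp
  moreover have "(0::real) \<in> {0..\<nu> 2}" using nu2pos by simp
  ultimately show ?thesis unfolding Sset_def mem_Collect_eq by blast
qed

lemma S_sub: "Sset \<epsilon> \<subseteq> Kset \<epsilon>"
proof
  fix u assume "u \<in> Sset \<epsilon>"
  then obtain t where t: "u = (1 - T t) / (T1 t - \<epsilon> * T t)" "0 \<le> t" "t \<le> \<nu> 2" "T1 t > \<epsilon> * T t"
    unfolding Sset_def by auto
  define p where "p x = T (x + t)" for x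
  have pPS: "p \<in> PS h" using PS_shift[OF TPS] unfolding p_def[abs_def] .
  have "\<forall>x\<ge>0. \<bar>p x\<bar> \<le> 1" using Tb t(2) by (simp add: p_def)
  then have pn: "sup_norm p \<le> 1" using sup_norm_le_iff[OF bdd[OF pPS]] by blast
  have p0: "p 0 = T t" by (simp add: p_def)
  have dp0: "deriv p 0 = T1 t" using deriv_shift[OF TPS, of t 0] unfolding p_def[abs_def] by simp
  have "p \<in> Pspace h" using pPS Pspace_PS by simp
  then show "u \<in> Kset \<epsilon>" unfolding Kset_def mem_Collect_eq
    by (intro exI[of _ p]) (use t pn p0 dp0 in simp)
qed

lemma K_ge: "v \<in> Kset \<epsilon> \<Longrightarrow> \<exists>u\<in>Sset \<epsilon>. u \<le> v"
proof -
  assume "v \<in> Kset \<epsilon>"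
  then obtain p where p: "v = (1 - p 0) / (deriv p 0 - \<epsilon> * p 0)" "p \<in> Pspace h" "sup_norm p \<le> 1"
    "deriv p 0 > \<epsilon> * p 0" unfolding Kset_def by auto
  have pPS: "p \<in> PS h" using p(2) Pspace_PS by simp
  have pb: "\<forall>x\<ge>0. \<bar>p x\<bar> \<le> 1" using PSb[OF pPS p(3)] by blast
  then have "-1 \<le> p 0" "p 0 \<le> 1" by (auto simp: abs_le_iff)
  then obtain t where t: "0 \<le> t" "t \<le> \<nu> 2" "T t = p 0" using T_onto by blast
  have le: "deriv p 0 \<le> T1 t" using cmp[OF pPS pb t] .
  define u where "u = (1 - T t) / (T1 t - \<epsilon> * T t)"
  have "T1 t > \<epsilon> * T t" using le p(4) t(3) by simp
  then have uS: "u \<in> Sset \<epsilon>" unfolding Sset_def u_def mem_Collect_eq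
    by (intro exI[of _ t]) (use t in simp)
  have "u \<le> v" unfolding u_def p(1) t(3)
    by (rule divide_left_mono) (use le p(4) \<open>p 0 \<le> 1\<close> in auto)
  then show ?thesis using uS by blast
qed

lemma K_nonneg: "v \<in> Kset \<epsilon> \<Longrightarrow> 0 \<le> v"
proof -
  assume "v \<in> Kset \<epsilon>"
  then obtain p where p: "v = (1 - p 0) / (deriv p 0 - \<epsilon> * p 0)" "p \<in> Pspace h" "sup_norm p \<le> 1"
    "deriv p 0 > \<epsilon> * p 0" unfolding Kset_def by auto
  have pPS: "p \<in> PS h" using p(2) Pspace_PS by simp
  have "\<bar>p 0\<bar> \<le> 1" using PSb[OF pPS p(3)] by simp
  then show "0 \<le> v" using p(1,4) by simp
qed

lemma kappa_eq: assumes e: "0 < \<epsilon>" shows "kappa h \<epsilon> = Inf (Sset \<epsilon>)"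
proof -
  have kK: "kappa h \<epsilon> = Inf (Kset \<epsilon>)" unfolding kappa_def Kset_def by simp
  have bK: "bdd_below (Kset \<epsilon>)" using K_nonneg by (auto simp: bdd_below_def)
  have bS: "bdd_below (Sset \<epsilon>)" using bdd_below_mono[OF bK S_sub] .
  have Sne: "Sset \<epsilon> \<noteq> {}" using S_ne[OF e] by blast
  have Kne: "Kset \<epsilon> \<noteq> {}" using Sne S_sub by blast
  have "Inf (Kset \<epsilon>) \<le> Inf (Sset \<epsilon>)"
    by (rule cInf_greatest[OF Sne]) (use cInf_lower[OF _ bK] S_sub in blast)
  moreover have "Inf (Sset \<epsilon>) \<le> Inf (Kset \<epsilon>)"
  proof (rule cInf_greatest[OF Kne])
    fix v assume "v \<in> Kset \<epsilon>"
    then obtain u where "u \<in> Sset \<epsilon>" "u \<le> v" using K_ge by blast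
    then show "Inf (Sset \<epsilon>) \<le> v" using cInf_lower[OF _ bS, of u] by linarith
  qed
  ultimately show ?thesis using kK by simp
qed

lemma V_ex: "\<exists>V>0. \<forall>t\<in>{0..\<nu> 2}. T1 t \<le> V"
proof -
  obtain t0 where "t0 \<in> {0..\<nu> 2}" "\<forall>t\<in>{0..\<nu> 2}. T1 t \<le> T1 t0"
    using continuous_attains_sup[OF compact_Icc _ T1cont] nu2pos by (metis atLeastAtMost_iff empty_iff less_eq_real_def)
  then show ?thesis by (intro exI[of _ "max (T1 t0) 1"]) (auto simp: le_max_iff_disj)
qed

definition "VV = (SOME V. V > 0 \<and> (\<forall>t\<in>{0..\<nu> 2}. T1 t \<le> V))"

lemma VV: "VV > 0" "t \<in> {0..\<nu> 2} \<Longrightarrow> T1 t \<le> VV"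
  using someI_ex[OF V_ex[unfolded Bex_def]] unfolding VV_def by blast+

lemma dbound:
  assumes p: "p \<in> PS h" "\<forall>x\<ge>0. \<bar>p x\<bar> \<le> 1" and x0: "0 \<le> x0"
  shows "\<bar>deriv p x0\<bar> \<le> VV"
proof -
  define q where "q x = p (x + x0)" for x
  have qPS: "q \<in> PS h" using PS_shift[OF p(1)] unfolding q_def[abs_def] .
  have qb: "\<forall>x\<ge>0. \<bar>q x\<bar> \<le> 1" using p(2) x0 by (simp add: q_def)
  have dq: "deriv q 0 = deriv p x0" using deriv_shift[OF p(1), of x0 0] unfolding q_def[abs_def] by simp
  have "-1 \<le> q 0" "q 0 \<le> 1" using qb by (auto simp: abs_le_iff)
  then obtain t where t: "0 \<le> t" "t \<le> \<nu> 2" "T t = q 0" using T_onto by blast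
  have up: "deriv p x0 \<le> VV" using cmp[OF qPS qb t] dq VV(2)[of t] t by simp
  define r where "r x = (-1) * q x" for x
  have rPS: "r \<in> PS h" using PS_scale[OF qPS] unfolding r_def[abs_def] .
  have rb: "\<forall>x\<ge>0. \<bar>r x\<bar> \<le> 1" using qb by (simp add: r_def)
  have dr: "deriv r 0 = - deriv p x0" using deriv_scale[OF qPS, of "-1" 0] dq unfolding r_def[abs_def] by simp
  have "-1 \<le> r 0" "r 0 \<le> 1" using rb by (auto simp: abs_le_iff)
  then obtain t' where t': "0 \<le> t'" "t' \<le> \<nu> 2" "T t' = r 0" using T_onto by blast
  have lo: "- deriv p x0 \<le> VV" using cmp[OF rPS rb t'] dr VV(2)[of t'] t' by simp
  show ?thesis using up lo by simp
qed

lemma d2bound: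
  assumes p: "p \<in> PS h" "\<forall>x\<ge>0. \<bar>p x\<bar> \<le> 1" and x0: "0 \<le> x0"
  shows "\<bar>deriv (deriv p) x0\<bar> \<le> VV * VV"
proof -
  have p1: "deriv p \<in> PS h" using PS_deriv[OF p(1)] .
  define w where "w x = (1 / VV) * deriv p x" for x
  have wPS: "w \<in> PS h" using PS_scale[OF p1] unfolding w_def[abs_def] .
  have wb: "\<forall>x\<ge>0. \<bar>w x\<bar> \<le> 1"
  proof (intro allI impI)
    fix x :: real assume "0 \<le> x"
    then have "\<bar>deriv p x\<bar> \<le> VV" using dbound[OF p] by blast
    then show "\<bar>w x\<bar> \<le> 1" using VV(1) by (simp add: w_def abs_mult divide_le_eq)
  qed
  have "\<bar>deriv w x0\<bar> \<le> VV" using dbound[OF wPS wb x0] .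
  moreover have "deriv w x0 = (1 / VV) * deriv (deriv p) x0"
    unfolding w_def[abs_def] by (rule deriv_scale[OF p1])
  ultimately have "\<bar>deriv (deriv p) x0\<bar> / VV \<le> VV" using VV(1) by (simp add: abs_mult)
  then show ?thesis using VV(1) by (simp add: divide_le_eq)
qed

lemma M2_bound: "0 \<le> x \<Longrightarrow> \<bar>T2 x\<bar> \<le> M2 h"
proof -
  assume x: "0 \<le> x"
  define MS where "MS = {sup_norm (deriv (deriv p)) | p. p \<in> Pspace h \<and> sup_norm p \<le> 1}"
  have bddM: "bdd_above MS"
  proof (rule bdd_aboveI)
    fix m assume "m \<in> MS"
    then obtain p where p: "m = sup_norm (deriv (deriv p))" "p \<in> Pspace h" "sup_norm p \<le> 1"
      unfolding MS_def by auto
    have pPS: "p \<in> PS h" using p(2) Pspace_PS by simp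
    have pb: "\<forall>x\<ge>0. \<bar>p x\<bar> \<le> 1" using PSb[OF pPS p(3)] by blast
    have "sup_norm (deriv (deriv p)) \<le> VV * VV"
      using sup_norm_le_iff[OF bdd[OF PS_deriv[OF PS_deriv[OF pPS]]]] d2bound[OF pPS pb] by blast
    then show "m \<le> VV * VV" using p(1) by simp
  qed
  have "T \<in> Pspace h" using TPS Pspace_PS by simp
  then have "sup_norm T2 \<in> MS" unfolding MS_def mem_Collect_eq
    by (intro exI[of _ T]) (simp add: Tn)
  then have "sup_norm T2 \<le> M2 h" unfolding M2_def MS_def[symmetric] using cSup_upper[OF _ bddM] by blast
  moreover have "\<bar>T2 x\<bar> \<le> sup_norm T2" using sup_norm_ge[OF bdd[OF T2PS] x] .
  ultimately show ?thesis by simp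
qed

end



context cheb begin

lemma T2_all_const:
  assumes ab: "\<alpha> < \<beta>" and K: "\<forall>x\<in>{\<alpha><..<\<beta>}. T2 x = K"
  shows "T2 x = K"
proof -
  obtain P where P: "T2 = esf (set h) P 0" "\<forall>a\<in>set h. degree (P a) < mlt h a"
    using PS_esf[OF T2PS] by blast
  define P' where "P' = (\<lambda>a. if a = 0 then [:-K:] else P a)"
  have n0: "0 \<notin> set h" using hpos by force
  have f: "esf (insert 0 (set h)) P' 0 z = T2 z - K" for z
  proof -
    have "esf (insert 0 (set h)) P' 0 z = poly (P' 0) z * exp ((0 - 0) * z) + esf (set h) P' 0 z"
      unfolding esf_def using n0 by (simp add: sum.insert)
    also have "esf (set h) P' 0 z = esf (set h) P 0 z"
      unfolding esf_def P'_def using n0 by (intro sum.cong) auto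
    finally show ?thesis using P(1) by (simp add: P'_def)
  qed
  have "(\<Sum>a\<in>insert 0 (set h). degree (P' a) + 1) = 1 + (\<Sum>a\<in>set h. degree (P' a) + 1)"
    using n0 by (simp add: sum.insert P'_def)
  also have "(\<Sum>a\<in>set h. degree (P' a) + 1) = (\<Sum>a\<in>set h. degree (P a) + 1)"
    unfolding P'_def using n0 by (intro sum.cong) auto
  also have "\<dots> \<le> (\<Sum>a\<in>set h. mlt h a)" by (intro sum_mono) (use P(2) in auto)
  finally have deg: "(\<Sum>a\<in>insert 0 (set h). degree (P' a) + 1) \<le> Suc d" using sum_mlt by simp
  obtain Z where Z: "finite Z" "card Z = Suc d" "Z \<subseteq> {\<alpha><..<\<beta>}"
    using infinite_arbitrarily_large[OF infinite_Ioo[OF ab]] by blast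
  have "\<forall>z\<in>Z. esf (insert 0 (set h)) P' 0 z = 0" using Z(3) K f by auto
  then have "esf (insert 0 (set h)) P' 0 x = 0" using esf_zeros[OF _ deg Z(1)] Z(2) by simp
  then show ?thesis using f by simp
qed

lemma T2_not_const:
  assumes ab: "\<alpha> < \<beta>" and K: "\<forall>x\<in>{\<alpha><..<\<beta>}. T2 x = K"
  shows False
proof -
  have T2K: "T2 x = K" for x using T2_all_const[OF ab K] .
  define b where "b = T1 0"
  define \<psi>1 where "\<psi>1 x = T1 x - b - K * x" for x
  define \<psi> where "\<psi> x = T x - T 0 - b * x - (K / 2) * x^2" for x
  have d1: "(\<psi>1 has_real_derivative 0) (at x)" for x
  proof -
    have "(\<psi>1 has_real_derivative T2 x - 0 - K * 1) (at x)"
      unfolding \<psi>1_def[abs_def] by (intro DERIV_diff DERIV_cmult T1der DERIV_const DERIV_ident)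
    then show ?thesis using T2K by simp
  qed
  have p1: "\<psi>1 x = 0" for x using DERIV_isconst_all[of \<psi>1 x 0] d1 by (simp add: \<psi>1_def b_def)
  have d0: "(\<psi> has_real_derivative 0) (at x)" for x
  proof -
    have "(\<psi> has_real_derivative T1 x - 0 - b * 1 - (K / 2) * (real 2 * x ^ (2 - Suc 0))) (at x)"
      unfolding \<psi>_def[abs_def]
      by (intro DERIV_diff DERIV_cmult Tder DERIV_const DERIV_ident DERIV_pow)
    then show ?thesis using p1[of x] by (simp add: \<psi>1_def)
  qed
  have p0: "\<psi> x = 0" for x using DERIV_isconst_all[of \<psi> x 0] d0 by (simp add: \<psi>_def)
  have Tq: "T x = -1 + b * x + K * x^2 / 2" for x using p0[of x] T0 by (simp add: \<psi>_def algebra_simps)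
  have F: "\<bar>b * x + K * x^2 / 2\<bar> \<le> 2" if "0 \<le> x" for x
    using Tb[OF that] Tq[of x] by (simp add: abs_le_iff)
  have K0: "K = 0"
  proof (rule ccontr)
    assume "K \<noteq> 0"
    define x where "x = sqrt (7 / \<bar>K\<bar>)"
    have xx: "x^2 = 7 / \<bar>K\<bar>" unfolding x_def by simp
    have x0: "0 \<le> x" unfolding x_def by simp
    have "K * x^2 = (b * (2*x) + K * (2*x)^2 / 2) - 2 * (b * x + K * x^2 / 2)" by (simp add: algebra_simps power2_eq_square)
    moreover have "\<bar>b * (2*x) + K * (2*x)^2 / 2\<bar> \<le> 2" using F[of "2*x"] x0 by simp
    moreover have "\<bar>b * x + K * x^2 / 2\<bar> \<le> 2" using F[of x] x0 by simp
    moreover have gen: "\<And>k A B::real. k = A - 2 * B \<Longrightarrow> \<bar>A\<bar> \<le> 2 \<Longrightarrow> \<bar>B\<bar> \<le> 2 \<Longrightarrow> \<bar>k\<bar> \<le> 6"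
      by linarith
    ultimately have "\<bar>K * x^2\<bar> \<le> 6" by blast
    moreover have "\<bar>K * x^2\<bar> = 7" using xx \<open>K \<noteq> 0\<close> by (simp add: abs_mult)
    ultimately show False by simp
  qed
  have b0: "b = 0"
  proof (rule ccontr)
    assume "b \<noteq> 0"
    have "\<bar>b * (3 / \<bar>b\<bar>)\<bar> \<le> 2" using F[of "3 / \<bar>b\<bar>"] K0 by simp
    moreover have "\<bar>b * (3 / \<bar>b\<bar>)\<bar> = 3" using \<open>b \<noteq> 0\<close> by (simp add: abs_mult)
    ultimately show False by simp
  qed
  have "T (\<nu> 2) = -1" using Tq[of "\<nu> 2"] K0 b0 by simp
  then show False using Tnu2 by simp
qed

lemma M2_pos: "0 < M2 h"
proof -
  have ge: "0 \<le> M2 h" using M2_bound[of 0] by simp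
  show ?thesis
  proof (rule ccontr)
    assume "\<not> 0 < M2 h"
    then have "M2 h = 0" using ge by simp
    then have "\<forall>x\<in>{0<..<1}. T2 x = 0" using M2_bound by fastforce
    then show False using T2_not_const[of 0 1 0] by simp
  qed
qed

end



lemma mono_help:
  fixes f f' :: "real \<Rightarrow> real"
  assumes "\<And>x. (f has_real_derivative f' x) (at x)" "a \<le> b" "\<And>x. a < x \<Longrightarrow> x < b \<Longrightarrow> 0 \<le> f' x"
  shows "f a \<le> f b"
proof (rule DERIV_nonneg_imp_increasing_open[OF assms(2)])
  show "\<And>x. a < x \<Longrightarrow> x < b \<Longrightarrow> \<exists>y. (f has_real_derivative y) (at x) \<and> 0 \<le> y"
    using assms(1,3) by blast
  show "continuous_on {a..b} f"
    using assms(1) by (meson DERIV_continuous continuous_at_imp_continuous_on)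
qed

context cheb begin

lemma G_pos:
  assumes t: "0 \<le> t" "t \<le> \<nu> 2" and v: "0 < T1 t"
  shows "0 < M2 h * (1 - T t) - (T1 t)^2 / 2"
proof -
  define M where "M = M2 h"
  have Mp: "0 < M" using M2_pos M_def by simp
  define y where "y = T t"
  define v where "v = T1 t"
  have vp: "0 < v" using v v_def by simp
  define x0 where "x0 = v / M"
  have x0p: "0 < x0" using vp Mp x0_def by simp
  define \<phi> where "\<phi> x = T (x + t) - y - v * x + (M / 2) * x^2" for x
  define \<phi>1 where "\<phi>1 x = T1 (x + t) - v + M * x" for x
  define \<phi>2 where "\<phi>2 x = T2 (x + t) + M" for x
  have dphi: "(\<phi> has_real_derivative \<phi>1 x) (at x)" for x
  proof -
    have s: "((\<lambda>x. T (x + t)) has_real_derivative T1 (x + t)) (at x)"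
      using Tder[of "x + t"] DERIV_shift by blast
    have "(\<phi> has_real_derivative T1 (x + t) - 0 - v * 1 + (M / 2) * (real 2 * x ^ (2 - Suc 0))) (at x)"
      unfolding \<phi>_def[abs_def] by (intro DERIV_add DERIV_diff DERIV_cmult s DERIV_const DERIV_ident DERIV_pow)
    then show ?thesis by (simp add: \<phi>1_def)
  qed
  have dphi1: "(\<phi>1 has_real_derivative \<phi>2 x) (at x)" for x
  proof -
    have s: "((\<lambda>x. T1 (x + t)) has_real_derivative T2 (x + t)) (at x)"
      using T1der[of "x + t"] DERIV_shift by blast
    have "(\<phi>1 has_real_derivative T2 (x + t) - 0 + M * 1) (at x)"
      unfolding \<phi>1_def[abs_def] by (intro DERIV_add DERIV_diff DERIV_cmult s DERIV_const DERIV_ident)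
    then show ?thesis by (simp add: \<phi>2_def)
  qed
  have phi2: "0 \<le> \<phi>2 x" if "0 \<le> x" for x
    using M2_bound[of "x + t"] that t M_def by (simp add: \<phi>2_def abs_le_iff)
  have phi1: "0 \<le> \<phi>1 x" if "0 \<le> x" for x
  proof -
    have "\<phi>1 0 \<le> \<phi>1 x" using mono_help[OF dphi1 that] phi2 by simp
    then show ?thesis by (simp add: \<phi>1_def v_def)
  qed
  have phimono: "\<phi> a \<le> \<phi> b" if "0 \<le> a" "a \<le> b" for a b
    using mono_help[OF dphi that(2)] phi1 that by simp
  have phi0: "\<phi> 0 = 0" by (simp add: \<phi>_def y_def)
  have Tx0: "T (x0 + t) \<le> 1" using Tb[of "x0 + t"] x0p t by simp
  have "M * \<phi> x0 = M * T (x0 + t) - M * y - v^2 / 2"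
    unfolding \<phi>_def x0_def using Mp by (simp add: field_simps power2_eq_square)
  then have Mphi: "M * \<phi> x0 \<le> M * (1 - y) - v^2 / 2" using Tx0 Mp by (simp add: algebra_simps)
  show ?thesis
  proof (rule ccontr)
    assume "\<not> ?thesis"
    then have "M * (1 - y) - v^2 / 2 \<le> 0" by (simp add: M_def y_def v_def)
    then have "M * \<phi> x0 \<le> 0" using Mphi by simp
    then have "\<phi> x0 \<le> 0" using Mp by (simp add: mult_le_0_iff)
    then have zero: "\<phi> x = 0" if "0 \<le> x" "x \<le> x0" for x
      using phimono[of 0 x] phimono[of x x0] that phi0 by simp
    have z1: "\<phi>1 x = 0" if "0 < x" "x < x0" for x
    proof -
      have a: "0 < min x (x0 - x)" using that by simp
      have b: "\<forall>y. \<bar>x - y\<bar> < min x (x0 - x) \<longrightarrow> \<phi> x = \<phi> y"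
        using zero that by (auto simp: abs_less_iff)
      show ?thesis using DERIV_local_const[OF dphi[of x] a b] .
    qed
    have z2: "\<phi>2 x = 0" if "0 < x" "x < x0" for x
    proof -
      have a: "0 < min x (x0 - x)" using that by simp
      have b: "\<forall>y. \<bar>x - y\<bar> < min x (x0 - x) \<longrightarrow> \<phi>1 x = \<phi>1 y"
        using z1 that by (auto simp: abs_less_iff)
      show ?thesis using DERIV_local_const[OF dphi1[of x] a b] .
    qed
    have "\<forall>z\<in>{t<..<t + x0}. T2 z = - M"
    proof
      fix z assume "z \<in> {t<..<t + x0}"
      then have "0 < z - t" "z - t < x0" by auto
      then have "\<phi>2 (z - t) = 0" using z2 by blast
      then show "T2 z = - M" by (simp add: \<phi>2_def)
    qed
    then show False using T2_not_const[of t "t + x0" "-M"] x0p by simp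
  qed
qed

lemma N_pos:
  assumes e: "0 < \<epsilon>" and t: "0 \<le> t" "t \<le> \<nu> 2"
  shows "0 < 2 * \<epsilon>^2 - 2 * \<epsilon> * T1 t + M2 h * (1 - T t)"
proof -
  have eq: "2 * \<epsilon>^2 - 2 * \<epsilon> * T1 t + M2 h * (1 - T t) =
      (T1 t - 2 * \<epsilon>)^2 / 2 + (M2 h * (1 - T t) - (T1 t)^2 / 2)"
    by (simp add: field_simps power2_eq_square)
  show ?thesis
  proof (cases "T1 t = 0")
    case True
    have "0 \<le> M2 h * (1 - T t)" using M2_pos Tb[of t] t by (simp add: abs_le_iff)
    moreover have "0 < (T1 t - 2 * \<epsilon>)^2 / 2" using True e by simp
    moreover have "(T1 t)^2 / 2 = 0" using True by simp
    ultimately show ?thesis using eq by linarith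
  next
    case False
    then have "0 < T1 t" using T1_nonneg[OF t] by simp
    then have "0 < M2 h * (1 - T t) - (T1 t)^2 / 2" using G_pos[OF t] by simp
    moreover have "0 \<le> (T1 t - 2 * \<epsilon>)^2 / 2" by simp
    ultimately show ?thesis using eq by linarith
  qed
qed

lemma final:
  assumes e: "0 < \<epsilon>"
  shows "2 * \<epsilon> / (M2 h + 2 * \<epsilon>^2) < Inf (Sset \<epsilon>)"
proof -
  define M where "M = M2 h"
  have Mp: "0 < M" using M2_pos M_def by simp
  define N where "N t = 2 * \<epsilon>^2 - 2 * \<epsilon> * T1 t + M * (1 - T t)" for t
  have cN: "continuous_on {0..\<nu> 2} N" unfolding N_def[abs_def]
    by (intro continuous_intros T1cont Tcont)
  obtain tm where tm: "tm \<in> {0..\<nu> 2}" "\<forall>t\<in>{0..\<nu> 2}. N tm \<le> N t"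
    using continuous_attains_inf[OF compact_Icc _ cN] nu2pos
    by (metis atLeastAtMost_iff empty_iff less_eq_real_def)
  define n0 where "n0 = N tm"
  have n0p: "0 < n0" using N_pos[OF e] tm(1) unfolding n0_def N_def M_def by simp
  define C where "C = M + 2 * \<epsilon>^2"
  have Cp: "0 < C" using Mp unfolding C_def by (simp add: add_pos_nonneg)
  define \<eta> where "\<eta> = n0 / ((VV + \<epsilon>) * C)"
  have etap: "0 < \<eta>" using n0p Cp VV(1) e by (simp add: \<eta>_def)
  define B where "B = 2 * \<epsilon> / C"
  have lb: "B + \<eta> \<le> u" if "u \<in> Sset \<epsilon>" for u
  proof -
    obtain t where t: "u = (1 - T t) / (T1 t - \<epsilon> * T t)" "0 \<le> t" "t \<le> \<nu> 2" "T1 t > \<epsilon> * T t"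
      using \<open>u \<in> Sset \<epsilon>\<close> unfolding Sset_def by auto
    define D where "D = T1 t - \<epsilon> * T t"
    have Dp: "0 < D" using t D_def by simp
    have "- 1 \<le> T t" using Tb[of t] t by (simp add: abs_le_iff)
    then have "\<epsilon> * (- 1) \<le> \<epsilon> * T t" using e by (simp only: mult_le_cancel_left_pos)
    then have "- \<epsilon> * T t \<le> \<epsilon>" by simp
    then have DV: "D \<le> VV + \<epsilon>" using VV(2)[of t] t D_def by simp
    have num: "(1 - T t) * C - 2 * \<epsilon> * D = N t"
      unfolding D_def C_def N_def by (simp add: algebra_simps power2_eq_square)
    have "u - B = ((1 - T t) * C - 2 * \<epsilon> * D) / (D * C)"
      unfolding t(1) D_def[symmetric] B_def using Dp Cp by (simp add: field_simps)
    then have "u - B = N t / (D * C)" using num by simp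
    moreover have "n0 / ((VV + \<epsilon>) * C) \<le> N t / (D * C)"
    proof (rule frac_le)
      have "n0 \<le> N t" using tm t unfolding n0_def by simp
      then show "n0 \<le> N t" .
      show "0 \<le> N t" using n0p \<open>n0 \<le> N t\<close> by linarith
      show "0 < D * C" using Dp Cp by simp
      show "D * C \<le> (VV + \<epsilon>) * C" using DV Cp by simp
    qed
    ultimately show ?thesis unfolding \<eta>_def by simp
  qed
  have "B + \<eta> \<le> Inf (Sset \<epsilon>)"
    by (rule cInf_greatest) (use S_ne[OF e] lb in auto)
  then show ?thesis using etap unfolding B_def C_def M_def by simp
qed

end


theorem proposition3:
  fixes d :: nat and \<epsilon> :: real and h :: "real list"
    and T :: "real \<Rightarrow> real" and \<nu> :: "nat \<Rightarrow> real"
  assumes "d \<ge> 2" and "\<epsilon> > 0" and "h \<in> Delta d"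
    and "is_cheb_alt h T \<nu>"
  shows "kappa h \<epsilon> = Inf {(1 - T t) / (deriv T t - \<epsilon> * T t) | t.
            t \<in> {0..\<nu> 2} \<and> deriv T t > \<epsilon> * T t}
     \<and> kappa h \<epsilon> > 2 * \<epsilon> / (M2 h + 2 * \<epsilon>^2)"
proof -
  have len: "length h = d" and hp: "\<forall>a\<in>set h. 0 < a" using assms(3) unfolding Delta_def by auto
  have c: "T \<in> Pspace h" "sup_norm T = 1" "\<nu> 1 = 0" "\<forall>j\<in>{1..<length h}. \<nu> j < \<nu> (Suc j)"
    "\<forall>j\<in>{1..length h}. T (\<nu> j) = (-1)^j" using assms(4) unfolding is_cheb_alt_def by auto
  interpret cheb h T \<nu>
  proof
    show "2 \<le> length h" using len assms(1) by simp
    show "\<forall>a\<in>set h. 0 < a" using hp .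
    show "T \<in> PS h" using c(1) Pspace_PS by simp
  qed (use c in auto)
  show ?thesis using kappa_eq[OF assms(2)] final[OF assms(2)] unfolding Sset_def by simp
qed

end
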